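(* There exists a chore allocation instance with two agents $N=\{1,2\}$ and two chores (with additive, nonpositive, normalized valuations $V_i(M)=-1$ and shares $s_1,s_2\in(0,1]$, $s_1+s_2=1$) such that for every allocation $\langle X_1,X_2\rangle$ of the chores there is an agent $i\in\{1,2\}$ with $V_i(X_i)\le \frac{4}{3}\mathsf{WMMS}_i$. In other words, no algorithm can guarantee every agent $i$ a value strictly larger than $\frac43\mathsf{WMMS}_i$; any algorithm has approximation ratio at least $\frac43$ for WMMS fairness.
   Context: A chore allocation instance consists of agents $N=\{1,\dots,n\}$, chores $M$, additive valuations $V_i$ with $V_i(\{j\})\le 0$, $V_i(M)=-1$, and shares $s_i\in(0,1]$ summing to $1$. An allocation is an ordered partition $\langle X_1,\dots,X_n\rangle$ of $M$ (bundles possibly empty). The weighted maxmin share is $\mathsf{WMMS}_i:=\max_{\langle Y_1,\dots,Y_n\rangle}\min_{k\in N}V_i(Y_k)\frac{s_i}{s_k}$, the maximum over all allocations. For $\alpha\ge1$, an allocation is $\alpha$-WMMS if $V_i(X_i)\ge\alpha\,\mathsf{WMMS}_i$ for all $i$. *)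

theory Defs
  imports Main "HOL.Real"
begin

definition val :: "('a \<Rightarrow> 'c \<Rightarrow> real) \<Rightarrow> 'a \<Rightarrow> 'c set \<Rightarrow> real" where
  "val v i X = (\<Sum>j\<in>X. v i j)"

definition chore_instance ::
  "'a set \<Rightarrow> 'c set \<Rightarrow> ('a \<Rightarrow> 'c \<Rightarrow> real) \<Rightarrow> ('a \<Rightarrow> real) \<Rightarrow> bool" where
  "chore_instance N M v s \<longleftrightarrow>
     finite N \<and> N \<noteq> {} \<and> finite M \<and>
     (\<forall>i\<in>N. \<forall>j\<in>M. v i j \<le> 0) \<and>
     (\<forall>i\<in>N. val v i M = -1) \<and>
     (\<forall>i\<in>N. 0 < s i \<and> s i \<le> 1) \<and>
     (\<Sum>i\<in>N. s i) = 1"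

definition is_allocation :: "'a set \<Rightarrow> 'c set \<Rightarrow> ('a \<Rightarrow> 'c set) \<Rightarrow> bool" where
  "is_allocation N M X \<longleftrightarrow>
     (\<forall>i\<in>N. X i \<subseteq> M) \<and> (\<Union>i\<in>N. X i) = M \<and>
     (\<forall>i\<in>N. \<forall>k\<in>N. i \<noteq> k \<longrightarrow> X i \<inter> X k = {})"

text \<open>Weighted maxmin share; the supremum ranges over a finite nonempty set of values,
  so it is the maximum.\<close>
definition WMMS ::
  "'a set \<Rightarrow> 'c set \<Rightarrow> ('a \<Rightarrow> 'c \<Rightarrow> real) \<Rightarrow> ('a \<Rightarrow> real) \<Rightarrow> 'a \<Rightarrow> real" where
  "WMMS N M v s i =
     Sup {Min ((\<lambda>k. val v i (Y k) * s i / s k) ` N) | Y. is_allocation N M Y}"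

end

theory Submission
  imports Defs
begin

lemma wmms_ge:
  assumes "is_allocation N M Y" "\<forall>i\<in>N. \<forall>j\<in>M. v i j \<le> 0" "\<forall>k\<in>N. s k > 0"
    "i \<in> N" "finite N"
  shows "Min ((\<lambda>k. val v i (Y k) * s i / s k) ` N) \<le> WMMS N M v s i"
  unfolding WMMS_def
proof (rule cSup_upper)
  show "Min ((\<lambda>k. val v i (Y k) * s i / s k) ` N)
    \<in> {Min ((\<lambda>k. val v i (Y k) * s i / s k) ` N) |Y. is_allocation N M Y}"
    using assms(1) by blast
  show "bdd_above {Min ((\<lambda>k. val v i (Y k) * s i / s k) ` N) |Y. is_allocation N M Y}"
  proof (rule bdd_aboveI[where M=0], clarify)
    fix Z assume Z: "is_allocation N M Z"
    have "val v i (Z i) \<le> 0"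
      unfolding val_def using Z assms(2,4) unfolding is_allocation_def
      by (intro sum_nonpos) blast
    hence "val v i (Z i) * s i / s i \<le> 0" using assms(3,4)
      by (simp add: divide_nonpos_pos mult_nonpos_nonneg)
    moreover have "Min ((\<lambda>k. val v i (Z k) * s i / s k) ` N) \<le> val v i (Z i) * s i / s i"
      by (rule Min_le[OF finite_imageI[OF assms(5)] imageI[OF assms(4)]])
    ultimately show "Min ((\<lambda>k. val v i (Z k) * s i / s k) ` N) \<le> 0" by linarith
  qed
qed

theorem lemma3:
  shows "\<exists>(M::nat set) (v::nat \<Rightarrow> nat \<Rightarrow> real) (s::nat \<Rightarrow> real).
           card M = 2 \<and> chore_instance {1,2} M v s \<and>
           (\<forall>X. is_allocation {1,2} M X \<longrightarrow>
              (\<exists>i\<in>{1,2}. val v i (X i) \<le> 4/3 * WMMS {1,2} M v s i))"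
proof -
  define M :: "nat set" where "M = {0,1}"
  define v :: "nat \<Rightarrow> nat \<Rightarrow> real" where
    "v = (\<lambda>i j. if i = 1 then -1/2 else if j = 0 then -1/4 else -3/4)"
  define s :: "nat \<Rightarrow> real" where "s = (\<lambda>i. if i = 1 then 1/4 else 3/4)"
  have ci: "chore_instance {1,2} M v s"
    unfolding chore_instance_def M_def v_def s_def val_def by auto
  have vn: "\<forall>i\<in>{1,2}. \<forall>j\<in>M. v i j \<le> 0" unfolding M_def v_def by auto
  have sp: "\<forall>k\<in>{1,2::nat}. s k > 0" unfolding s_def by auto
  define Y1 :: "nat \<Rightarrow> nat set" where "Y1 = (\<lambda>k. if k = 1 then {} else M)"
  define Y2 :: "nat \<Rightarrow> nat set" where "Y2 = (\<lambda>k. if k = 1 then {0} else {1})"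
  have a1: "is_allocation {1,2} M Y1" unfolding is_allocation_def Y1_def M_def by auto
  have a2: "is_allocation {1,2} M Y2" unfolding is_allocation_def Y2_def M_def by auto
  have "Min ((\<lambda>k. val v 1 (Y1 k) * s 1 / s k) ` {1,2}) = -1/3"
    unfolding Y1_def M_def v_def s_def val_def by simp
  hence W1: "-1/3 \<le> WMMS {1,2} M v s 1"
    using wmms_ge[OF a1 vn sp, of 1] by simp
  have "Min ((\<lambda>k. val v 2 (Y2 k) * s 2 / s k) ` {1,2}) = -3/4"
    unfolding Y2_def M_def v_def s_def val_def by simp
  hence W2: "-3/4 \<le> WMMS {1,2} M v s 2"
    using wmms_ge[OF a2 vn sp, of 2] by simp
  have main: "\<exists>i\<in>{1,2}. val v i (X i) \<le> 4/3 * WMMS {1,2} M v s i"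
    if X: "is_allocation {1,2} M X" for X
  proof (cases "X 1 = {}")
    case True
    hence "X 2 = M" using X unfolding is_allocation_def by auto
    hence "val v 2 (X 2) = -1" unfolding M_def v_def val_def by simp
    thus ?thesis using W2 by force
  next
    case False
    have sub: "X 1 \<subseteq> {0,1}" using X unfolding is_allocation_def M_def by auto
    have fin: "finite (X 1)" using sub finite_subset by blast
    have "val v 1 (X 1) = - real (card (X 1)) / 2" unfolding v_def val_def by simp
    moreover have "card (X 1) \<ge> 1" using False fin by (simp add: Suc_le_eq card_gt_0_iff)
    ultimately have "val v 1 (X 1) \<le> -1/2" by simp
    thus ?thesis using W1 by force
  qed
  show ?thesis
    apply (rule exI[of _ M], rule exI[of _ v], rule exI[of _ s])
    using ci main by (auto simp: M_def)
qed

end
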